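(* Consider the sub-$\ell^\infty$ structure on $\mathbb{R}^3$ defined by $Y_1=\partial_x+\partial_y+y^2\partial_z$, $Y_2=\partial_x-\partial_y+y^2\partial_z$. Let $(\lambda,\gamma)$ be an extremal pair, $j\in\{1,2\}$, and $t_0$ a time such that the restriction to some interval $(t_0-\varepsilon,t_0)$ is a regular arc and the restriction to some interval $(t_0,t_0+\varepsilon)$ is a $\varphi_j$-singular arc (or the same with the roles of the two sides exchanged). Then on the regular arc the switching function $\varphi_j$ is a polynomial of degree $2$ in $t$, and $\varphi_j$ is differentiable at $t_0$ with $\dot\varphi_j(t_0)=0$.
   Context: Sub-$\ell^\infty$ structure defined by smooth vector fields $X_1,\dots,X_k$ on a manifold $M$ (here $X_1=Y_1$, $X_2=Y_2$): an admissible trajectory is an absolutely continuous curve $\gamma:[0,T]\to M$ together with a measurable control $u=(u_1,\dots,u_k):[0,T]\to\mathbb{R}^k$ with $|u_i(t)|\le1$ for all $i$ and a.e. $t$, such that $\dot\gamma(t)=\sum_i u_i(t)X_i(\gamma(t))$ for a.e. $t$. An extremal pair is a pair $(\lambda,\gamma)$ where $\gamma$ is admissible with control $u$ and $\lambda:[0,T]\to T^*M$ is absolutely continuous with $\lambda(t)\in T^*_{\gamma(t)}M\setminus\{0\}$, such that, with $\mathcal H(\lambda,p,u)=\sum_i u_i\langle\lambda,X_i(p)\rangle$, in canonical coordinates $\dot\lambda=-\partial_p\mathcal H(\lambda,\gamma,u)$, $\dot\gamma=\partial_\lambda\mathcal H(\lambda,\gamma,u)$ a.e., and there is a constant $\lambda_0\ge0$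 with $\sum_iu_i(t)\langle\lambda(t),X_i(\gamma(t))\rangle=\sum_i|\langle\lambda(t),X_i(\gamma(t))\rangle|=\lambda_0$ for a.e. $t$; $\gamma$ is then an extremal trajectory and $\lambda$ an extremal lift. The switching functions are $\varphi_j(t)=\langle\lambda(t),X_j(\gamma(t))\rangle$. The restriction of an extremal pair to an open interval $I$ is a $\varphi_j$-singular arc if $\varphi_j\equiv0$ on $I$, and a regular arc if $\varphi_i(t)\ne0$ for all $t\in I$ and all $i$. *)

theory Defs
  imports "HOL-Analysis.Analysis"
begin

text \<open>Points of the manifold M = R^3 and covectors in canonical coordinates
  are both represented as triples; the pairing of a covector with a tangent
  vector is the inner product of the coordinate triples.\<close>

type_synonym R3 = "real \<times> real \<times> real"

definition ac_on :: "real set \<Rightarrow> (real \<Rightarrow> 'a::real_normed_vector) \<Rightarrow> bool" where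
  "ac_on S f \<longleftrightarrow>
     (\<forall>e>0. \<exists>d>0. \<forall>(n::nat) (a::nat \<Rightarrow> real) b.
        (\<forall>i<n. a i \<le> b i \<and> {a i..b i} \<subseteq> S) \<longrightarrow>
        (\<forall>i<n. \<forall>j<n. i \<noteq> j \<longrightarrow> b i \<le> a j \<or> b j \<le> a i) \<longrightarrow>
        (\<Sum>i<n. b i - a i) < d \<longrightarrow>
        (\<Sum>i<n. norm (f (b i) - f (a i))) < e)"

text \<open>A sub-l-infinity structure is given by vector fields X 1, ..., X k on R^3.
  Controls are functions u :: real => nat => real, with u t i the i-th component.\<close>

definition admissible ::
  "nat \<Rightarrow> (nat \<Rightarrow> R3 \<Rightarrow> R3) \<Rightarrow> real \<Rightarrow> (real \<Rightarrow> R3) \<Rightarrow> (real \<Rightarrow> nat \<Rightarrow> real) \<Rightarrow> bool" where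
  "admissible k X T \<gamma> u \<longleftrightarrow>
     0 \<le> T \<and> ac_on {0..T} \<gamma> \<and>
     (\<forall>i\<in>{1..k}. (\<lambda>t. u t i) \<in> borel_measurable (lebesgue_on {0..T})) \<and>
     (AE t in lborel. t \<in> {0..T} \<longrightarrow>
        (\<forall>i\<in>{1..k}. \<bar>u t i\<bar> \<le> 1) \<and>
        (\<gamma> has_vector_derivative (\<Sum>i=1..k. u t i *\<^sub>R X i (\<gamma> t))) (at t within {0..T}))"

definition ham :: "nat \<Rightarrow> (nat \<Rightarrow> R3 \<Rightarrow> R3) \<Rightarrow> R3 \<Rightarrow> R3 \<Rightarrow> (nat \<Rightarrow> real) \<Rightarrow> real" where
  "ham k X l p w = (\<Sum>i=1..k. w i * (l \<bullet> X i p))"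

text \<open>Extremal pair (lambda, gamma) with control u on [0,T].  The Hamiltonian
  equations in canonical coordinates are expressed via the gradients of H with
  respect to p and to lambda.\<close>

definition extremal_pair ::
  "nat \<Rightarrow> (nat \<Rightarrow> R3 \<Rightarrow> R3) \<Rightarrow> real \<Rightarrow> (real \<Rightarrow> R3) \<Rightarrow> (real \<Rightarrow> R3) \<Rightarrow> (real \<Rightarrow> nat \<Rightarrow> real) \<Rightarrow> bool" where
  "extremal_pair k X T lam \<gamma> u \<longleftrightarrow>
     admissible k X T \<gamma> u \<and>
     ac_on {0..T} lam \<and>
     (\<forall>t\<in>{0..T}. lam t \<noteq> 0) \<and>
     (AE t in lborel. t \<in> {0..T} \<longrightarrow>
        (\<exists>gp gl.
           ((\<lambda>p. ham k X (lam t) p (u t)) has_derivative (\<lambda>v. gp \<bullet> v)) (at (\<gamma> t)) \<and>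
           ((\<lambda>l. ham k X l (\<gamma> t) (u t)) has_derivative (\<lambda>v. gl \<bullet> v)) (at (lam t)) \<and>
           (lam has_vector_derivative (- gp)) (at t within {0..T}) \<and>
           (\<gamma> has_vector_derivative gl) (at t within {0..T}))) \<and>
     (\<exists>c0\<ge>0. AE t in lborel. t \<in> {0..T} \<longrightarrow>
        (\<Sum>i=1..k. u t i * (lam t \<bullet> X i (\<gamma> t))) = c0 \<and>
        (\<Sum>i=1..k. \<bar>lam t \<bullet> X i (\<gamma> t)\<bar>) = c0)"

definition switching :: "(nat \<Rightarrow> R3 \<Rightarrow> R3) \<Rightarrow> (real \<Rightarrow> R3) \<Rightarrow> (real \<Rightarrow> R3) \<Rightarrow> nat \<Rightarrow> real \<Rightarrow> real" where
  "switching X lam \<gamma> j t = lam t \<bullet> X j (\<gamma> t)"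

definition singular_arc ::
  "(nat \<Rightarrow> R3 \<Rightarrow> R3) \<Rightarrow> (real \<Rightarrow> R3) \<Rightarrow> (real \<Rightarrow> R3) \<Rightarrow> nat \<Rightarrow> real set \<Rightarrow> bool" where
  "singular_arc X lam \<gamma> j I \<longleftrightarrow> (\<forall>t\<in>I. switching X lam \<gamma> j t = 0)"

definition regular_arc ::
  "nat \<Rightarrow> (nat \<Rightarrow> R3 \<Rightarrow> R3) \<Rightarrow> (real \<Rightarrow> R3) \<Rightarrow> (real \<Rightarrow> R3) \<Rightarrow> real set \<Rightarrow> bool" where
  "regular_arc k X lam \<gamma> I \<longleftrightarrow> (\<forall>t\<in>I. \<forall>i\<in>{1..k}. switching X lam \<gamma> i t \<noteq> 0)"

definition Yfield :: "nat \<Rightarrow> R3 \<Rightarrow> R3" where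
  "Yfield i p = (case p of (x, y, z) \<Rightarrow>
     if i = 1 then (1, 1, y\<^sup>2) else if i = 2 then (1, -1, y\<^sup>2) else (0, 0, 0))"

end

theory Submission
  imports Defs "HOL-Analysis.Analysis"
begin


lemma disjoint_intervals_real:
  fixes u1 v1 u2 v2 :: real
  assumes "u1 < v1" "u2 < v2" "interior {u1..v1} \<inter> interior {u2..v2} = {}"
  shows "v1 \<le> u2 \<or> v2 \<le> u1"
proof (rule ccontr)
  assume "\<not> ?thesis"
  hence "u2 < v1" "u1 < v2" by auto
  define m where "m = (max u1 u2 + min v1 v2) / 2"
  have "m \<in> {u1<..<v1}" "m \<in> {u2<..<v2}" using assms \<open>u2 < v1\<close> \<open>u1 < v2\<close>
    by (auto simp: m_def)
  thus False using assms(3) by auto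
qed

lemma ac_deriv0_const:
  fixes f :: "real \<Rightarrow> real"
  assumes ac: "ac_on {a..b} f" and ab: "a \<le> b" and N: "negligible N"
    and d: "\<And>t. t \<in> {a..b} - N \<Longrightarrow> (f has_real_derivative 0) (at t within {a..b})"
  shows "f b = f a"
proof -
  have key: "\<bar>f b - f a\<bar> \<le> e * (b - a) + e" if e: "e > 0" for e
  proof -
    obtain \<delta> where \<delta>: "\<delta> > 0" and acd: "\<forall>(n::nat) (aa::nat \<Rightarrow> real) bb.
        (\<forall>i<n. aa i \<le> bb i \<and> {aa i..bb i} \<subseteq> {a..b}) \<longrightarrow>
        (\<forall>i<n. \<forall>j<n. i \<noteq> j \<longrightarrow> bb i \<le> aa j \<or> bb j \<le> aa i) \<longrightarrow>
        (\<Sum>i<n. bb i - aa i) < \<delta> \<longrightarrow>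
        (\<Sum>i<n. norm (f (bb i) - f (aa i))) < e"
      using ac[unfolded ac_on_def, rule_format, OF e] by blast
    have "(indicat_real N has_integral 0) (cbox a b)" using N unfolding negligible_def by blast
    then obtain g1 where g1: "gauge g1" and g1d: "\<And>p. p tagged_division_of (cbox a b) \<Longrightarrow> g1 fine p \<Longrightarrow>
        norm ((\<Sum>(x, k)\<in>p. Henstock_Kurzweil_Integration.content k *\<^sub>R indicat_real N x) - 0) < \<delta>"
      unfolding has_integral using \<delta> by meson
    have "\<exists>r>0. \<forall>y\<in>{a..b}. \<bar>y - t\<bar> < r \<longrightarrow> \<bar>f y - f t\<bar> \<le> e * \<bar>y - t\<bar>"
      if "t \<in> {a..b} - N" for t
    proof -
      have "(f has_derivative (*) 0) (at t within {a..b})"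
        using d[OF that] by (simp add: has_field_derivative_def)
      then obtain r where "r > 0" "\<forall>y\<in>{a..b}. norm (y - t) < r \<longrightarrow> norm (f y - f t - 0 * (y - t)) \<le> e * norm (y - t)"
        unfolding has_derivative_within_alt using e by meson
      thus ?thesis by auto
    qed
    then obtain r where r: "\<And>t. t \<in> {a..b} - N \<Longrightarrow> r t > 0 \<and> (\<forall>y\<in>{a..b}. \<bar>y - t\<bar> < r t \<longrightarrow> \<bar>f y - f t\<bar> \<le> e * \<bar>y - t\<bar>)"
      by metis
    define r' where "r' t = (if t \<in> {a..b} - N then r t else 1)" for t
    have r'pos: "\<forall>t. 0 < r' t" using r by (simp add: r'_def)
    define g where "g x = g1 x \<inter> ball x (r' x)" for x
    have "gauge g" unfolding g_def using g1 gauge_ball_dependent[OF r'pos] by (rule gauge_Int)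
    then obtain p where p: "p tagged_division_of {a..b}" and fine: "g fine p"
      by (rule fine_division_exists_real)
    have pfin: "finite p" using p by blast
    have fine1: "g1 fine p" using fine unfolding fine_def g_def by auto
    have cb: "cbox a b = {a..b}" by simp
    have Kform: "\<exists>u v. K = {u..v} \<and> u \<le> v \<and> x \<in> {u..v} \<and> {u..v} \<subseteq> {a..b}" if xKp0: "(x,K) \<in> p" for x K
    proof -
      obtain u v where "K = cbox u v" using tagged_division_ofD(4)[OF p xKp0] by blast
      moreover have "x \<in> K" "K \<subseteq> {a..b}" using tagged_division_ofD(2,3)[OF p xKp0] by auto
      ultimately show ?thesis by auto
    qed
    let ?h = "\<lambda>(x,K). f (Sup K) - f (Inf K)"
    define P1 where "P1 = {xK \<in> p. fst xK \<notin> N}"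
    define P2 where "P2 = {xK \<in> p. fst xK \<in> N}"
    have split: "sum ?h p = sum ?h P1 + sum ?h P2"
      unfolding P1_def P2_def using pfin by (subst sum.union_disjoint[symmetric]) (auto intro: sum.cong)
    have fb: "f b - f a = sum ?h p" using additive_tagged_division_1[OF ab p, where f=f] by simp
    have h1: "\<bar>?h xK\<bar> \<le> e * Henstock_Kurzweil_Integration.content (snd xK)" if "xK \<in> P1" for xK
    proof -
      obtain x K where xK: "xK = (x,K)" by force
      have xKp: "(x,K) \<in> p" and xN: "x \<notin> N" using that xK by (auto simp: P1_def)
      obtain u v where uv: "K = {u..v}" "u \<le> v" "x \<in> {u..v}" "{u..v} \<subseteq> {a..b}" using Kform[OF xKp] by blast
      have xab: "x \<in> {a..b} - N" using uv xN by auto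
      have "K \<subseteq> g x" using fine xKp unfolding fine_def by blast
      hence Kg: "K \<subseteq> ball x (r x)" using xab unfolding g_def r'_def by auto
      have "u \<in> K" "v \<in> K" using uv by auto
      hence "u \<in> ball x (r x)" "v \<in> ball x (r x)" using Kg by (auto simp del: mem_ball)
      hence "\<bar>u - x\<bar> < r x" "\<bar>v - x\<bar> < r x" by (auto simp: dist_real_def)
      moreover have R: "\<forall>y\<in>{a..b}. \<bar>y - x\<bar> < r x \<longrightarrow> \<bar>f y - f x\<bar> \<le> e * \<bar>y - x\<bar>" using r[OF xab] by blast
      moreover have "u \<in> {a..b}" "v \<in> {a..b}" using uv by auto
      ultimately have "\<bar>f u - f x\<bar> \<le> e * \<bar>u - x\<bar>" "\<bar>f v - f x\<bar> \<le> e * \<bar>v - x\<bar>"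
        by blast+
      moreover have "\<bar>u - x\<bar> = x - u" "\<bar>v - x\<bar> = v - x" using uv by auto
      ultimately have "\<bar>f v - f u\<bar> \<le> e * (v - u)" by (simp add: algebra_simps abs_le_iff) 
      thus ?thesis using uv xK by simp
    qed
    have "\<bar>sum ?h P1\<bar> \<le> (\<Sum>xK\<in>P1. e * Henstock_Kurzweil_Integration.content (snd xK))"
      by (rule order_trans[OF sum_abs]) (intro sum_mono h1)
    also have "\<dots> \<le> (\<Sum>xK\<in>p. e * Henstock_Kurzweil_Integration.content (snd xK))"
      using pfin e by (intro sum_mono2) (auto simp: P1_def)
    also have "\<dots> = e * (b - a)"
      using additive_content_tagged_division[of p a b] p ab
      by (simp add: sum_distrib_left[symmetric] case_prod_unfold)
    finally have part1: "\<bar>sum ?h P1\<bar> \<le> e * (b - a)" .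
    define P3 where "P3 = {xK \<in> P2. Inf (snd xK) < Sup (snd xK)}"
    have P3fin: "finite P3" using pfin by (simp add: P3_def P2_def)
    have P3form: "\<exists>u v. snd xK = {u..v} \<and> u < v \<and> Inf (snd xK) = u \<and> Sup (snd xK) = v \<and> {u..v} \<subseteq> {a..b}"
      if "xK \<in> P3" for xK
    proof -
      obtain x K where xK: "xK = (x,K)" by force
      have "(x,K) \<in> p" "Inf K < Sup K" using that xK by (auto simp: P3_def P2_def)
      then obtain u v where uv: "K = {u..v}" "u \<le> v" "{u..v} \<subseteq> {a..b}" using Kform by blast
      thus ?thesis using \<open>Inf K < Sup K\<close> xK by auto
    qed
    have "sum ?h P2 = sum ?h P3"
    proof (rule sum.mono_neutral_right)
      show "finite P2" using pfin by (simp add: P2_def)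
      show "P3 \<subseteq> P2" by (auto simp: P3_def)
      show "\<forall>i\<in>P2 - P3. ?h i = 0"
      proof
        fix xK assume a: "xK \<in> P2 - P3"
        obtain x K where xK: "xK = (x,K)" by force
        have "(x,K) \<in> p" using a xK by (auto simp: P2_def)
        then obtain u v where uv: "K = {u..v}" "u \<le> v" using Kform by blast
        hence "Inf K = u" "Sup K = v" by auto
        hence "u = v" using a xK uv by (auto simp: P3_def)
        thus "?h xK = 0" using xK uv by simp
      qed
    qed
    have "\<exists>h. bij_betw h {..<card P3} P3" using ex_bij_betw_nat_finite[OF P3fin] by (simp add: atLeast0LessThan)
    then obtain hh where hh: "bij_betw hh {..<card P3} P3" by blast
    define n where "n = card P3"
    note hh = hh[folded n_def]
    define aa where "aa i = Inf (snd (hh i))" for i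
    define bb where "bb i = Sup (snd (hh i))" for i
    have hin: "hh i \<in> P3" if "i < n" for i using hh that by (auto simp: bij_betw_def)
    have c1: "\<forall>i<n. aa i \<le> bb i \<and> {aa i..bb i} \<subseteq> {a..b}"
    proof (intro allI impI)
      fix i assume "i < n"
      from P3form[OF hin[OF this]] obtain u v where "Inf (snd (hh i)) = u" "Sup (snd (hh i)) = v" "u < v" "{u..v} \<subseteq> {a..b}"
        by blast
      thus "aa i \<le> bb i \<and> {aa i..bb i} \<subseteq> {a..b}"
        unfolding aa_def bb_def by simp
    qed
    have c2: "\<forall>i<n. \<forall>j<n. i \<noteq> j \<longrightarrow> bb i \<le> aa j \<or> bb j \<le> aa i"
    proof (intro allI impI)
      fix i j assume ij: "i < n" "j < n" "i \<noteq> j"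
      hence ne: "hh i \<noteq> hh j" using hh by (auto simp: bij_betw_def inj_on_def)
      obtain u1 v1 where 1: "snd (hh i) = {u1..v1}" "u1 < v1" "Inf (snd (hh i)) = u1" "Sup (snd (hh i)) = v1"
        using P3form[OF hin[OF ij(1)]] by blast
      obtain u2 v2 where 2: "snd (hh j) = {u2..v2}" "u2 < v2" "Inf (snd (hh j)) = u2" "Sup (snd (hh j)) = v2"
        using P3form[OF hin[OF ij(2)]] by blast
      have "hh i \<in> p" "hh j \<in> p" using hin ij by (auto simp: P3_def P2_def)
      hence "interior (snd (hh i)) \<inter> interior (snd (hh j)) = {}"
        using tagged_division_ofD(5)[OF p, of "fst (hh i)" "snd (hh i)" "fst (hh j)" "snd (hh j)"] ne
        by auto
      hence "v1 \<le> u2 \<or> v2 \<le> u1" using 1 2 by (intro disjoint_intervals_real) auto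
      thus "bb i \<le> aa j \<or> bb j \<le> aa i" unfolding aa_def bb_def using 1 2 by auto
    qed
    have "(\<Sum>i<n. bb i - aa i) = (\<Sum>xK\<in>P3. Sup (snd xK) - Inf (snd xK))"
      unfolding aa_def bb_def by (rule sum.reindex_bij_betw[OF hh, of "\<lambda>xK. Sup (snd xK) - Inf (snd xK)"])
    also have "\<dots> = (\<Sum>xK\<in>P3. Henstock_Kurzweil_Integration.content (snd xK))"
    proof (rule sum.cong[OF refl])
      fix xK assume "xK \<in> P3"
      from P3form[OF this] obtain u v where "snd xK = {u..v}" "u < v" "Inf (snd xK) = u" "Sup (snd xK) = v" by blast
      thus "Sup (snd xK) - Inf (snd xK) = Henstock_Kurzweil_Integration.content (snd xK)" by simp
    qed
    also have "\<dots> \<le> (\<Sum>xK\<in>p. Henstock_Kurzweil_Integration.content (snd xK) * indicat_real N (fst xK))"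
    proof -
      have "(\<Sum>xK\<in>P3. Henstock_Kurzweil_Integration.content (snd xK)) = (\<Sum>xK\<in>P3. Henstock_Kurzweil_Integration.content (snd xK) * indicat_real N (fst xK))"
        by (rule sum.cong) (auto simp: P3_def P2_def)
      also have "\<dots> \<le> (\<Sum>xK\<in>p. Henstock_Kurzweil_Integration.content (snd xK) * indicat_real N (fst xK))"
        using pfin by (intro sum_mono2) (auto simp: P3_def P2_def)
      finally show ?thesis .
    qed
    also have "\<dots> < \<delta>"
      using g1d[OF p[folded cb] fine1] by (simp add: case_prod_unfold)
    finally have c3: "(\<Sum>i<n. bb i - aa i) < \<delta>" .
    have "(\<Sum>i<n. norm (f (bb i) - f (aa i))) < e" using acd c1 c2 c3 by blast
    moreover have "(\<Sum>i<n. norm (f (bb i) - f (aa i))) = (\<Sum>xK\<in>P3. \<bar>?h xK\<bar>)"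
      unfolding aa_def bb_def
      by (subst sum.reindex_bij_betw[OF hh, symmetric]) (simp add: case_prod_unfold)
    ultimately have part2: "\<bar>sum ?h P2\<bar> < e"
      using \<open>sum ?h P2 = sum ?h P3\<close> sum_abs[of ?h P3] by linarith
    show ?thesis using fb split part1 part2 by linarith
  qed
  show ?thesis
  proof (rule ccontr)
    assume ne: "f b \<noteq> f a"
    define D where "D = \<bar>f b - f a\<bar>"
    have D: "D > 0" using ne by (simp add: D_def)
    define e where "e = D / (b - a + 2)"
    have e: "e > 0" using D ab by (simp add: e_def)
    have "D \<le> e * (b - a) + e" using key[OF e] by (simp add: D_def)
    also have "\<dots> = e * (b - a + 1)" by (simp add: algebra_simps)
    also have "\<dots> = D * (b - a + 1) / (b - a + 2)" by (simp add: e_def)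
    also have "\<dots> < D" using D ab by (simp add: pos_divide_less_eq)
    finally show False by simp
  qed
qed


lemma ac_on_mono:
  assumes "ac_on S f" "T \<subseteq> S" shows "ac_on T f"
  unfolding ac_on_def
proof (intro allI impI)
  fix e :: real assume e: "e > 0"
  then obtain d where d: "d > 0" and H: "\<forall>(n::nat) (a::nat \<Rightarrow> real) b.
        (\<forall>i<n. a i \<le> b i \<and> {a i..b i} \<subseteq> S) \<longrightarrow>
        (\<forall>i<n. \<forall>j<n. i \<noteq> j \<longrightarrow> b i \<le> a j \<or> b j \<le> a i) \<longrightarrow>
        (\<Sum>i<n. b i - a i) < d \<longrightarrow>
        (\<Sum>i<n. norm (f (b i) - f (a i))) < e"
    using assms(1)[unfolded ac_on_def, rule_format, OF e] by blast
  show "\<exists>d>0. \<forall>(n::nat) (a::nat \<Rightarrow> real) b.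
        (\<forall>i<n. a i \<le> b i \<and> {a i..b i} \<subseteq> T) \<longrightarrow>
        (\<forall>i<n. \<forall>j<n. i \<noteq> j \<longrightarrow> b i \<le> a j \<or> b j \<le> a i) \<longrightarrow>
        (\<Sum>i<n. b i - a i) < d \<longrightarrow>
        (\<Sum>i<n. norm (f (b i) - f (a i))) < e"
  proof (intro exI[of _ d] conjI d allI impI)
    fix n :: nat and a b :: "nat \<Rightarrow> real"
    assume h: "\<forall>i<n. a i \<le> b i \<and> {a i..b i} \<subseteq> T"
      "\<forall>i<n. \<forall>j<n. i \<noteq> j \<longrightarrow> b i \<le> a j \<or> b j \<le> a i" "(\<Sum>i<n. b i - a i) < d"
    have "\<forall>i<n. a i \<le> b i \<and> {a i..b i} \<subseteq> S" using h(1) assms(2) by blast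
    thus "(\<Sum>i<n. norm (f (b i) - f (a i))) < e" using H h(2,3) by blast
  qed
qed

lemma ac_on_comp_lip:
  assumes "ac_on S f" "\<And>x y. norm (g x - g y) \<le> norm (x - y)"
  shows "ac_on S (\<lambda>t. g (f t))"
  unfolding ac_on_def
proof (intro allI impI)
  fix e :: real assume e: "e > 0"
  then obtain d where d: "d > 0" and H: "\<forall>(n::nat) (a::nat \<Rightarrow> real) b.
        (\<forall>i<n. a i \<le> b i \<and> {a i..b i} \<subseteq> S) \<longrightarrow>
        (\<forall>i<n. \<forall>j<n. i \<noteq> j \<longrightarrow> b i \<le> a j \<or> b j \<le> a i) \<longrightarrow>
        (\<Sum>i<n. b i - a i) < d \<longrightarrow>
        (\<Sum>i<n. norm (f (b i) - f (a i))) < e"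
    using assms(1)[unfolded ac_on_def, rule_format, OF e] by blast
  show "\<exists>d>0. \<forall>(n::nat) (a::nat \<Rightarrow> real) b.
        (\<forall>i<n. a i \<le> b i \<and> {a i..b i} \<subseteq> S) \<longrightarrow>
        (\<forall>i<n. \<forall>j<n. i \<noteq> j \<longrightarrow> b i \<le> a j \<or> b j \<le> a i) \<longrightarrow>
        (\<Sum>i<n. b i - a i) < d \<longrightarrow>
        (\<Sum>i<n. norm (g (f (b i)) - g (f (a i)))) < e"
  proof (intro exI[of _ d] conjI d allI impI)
    fix n :: nat and a b :: "nat \<Rightarrow> real"
    assume h: "\<forall>i<n. a i \<le> b i \<and> {a i..b i} \<subseteq> S"
      "\<forall>i<n. \<forall>j<n. i \<noteq> j \<longrightarrow> b i \<le> a j \<or> b j \<le> a i" "(\<Sum>i<n. b i - a i) < d"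
    have "(\<Sum>i<n. norm (g (f (b i)) - g (f (a i)))) \<le> (\<Sum>i<n. norm (f (b i) - f (a i)))"
      by (intro sum_mono assms(2))
    also have "\<dots> < e" using H h by blast
    finally show "(\<Sum>i<n. norm (g (f (b i)) - g (f (a i)))) < e" .
  qed
qed

lemma ac_on_diff_lip:
  fixes f G :: "real \<Rightarrow> real"
  assumes "ac_on S f" "0 \<le> M" "\<And>x y. x \<in> S \<Longrightarrow> y \<in> S \<Longrightarrow> \<bar>G x - G y\<bar> \<le> M * \<bar>x - y\<bar>"
  shows "ac_on S (\<lambda>t. f t - G t)"
  unfolding ac_on_def
proof (intro allI impI)
  fix e :: real assume e: "e > 0"
  then have e2: "e/2 > 0" by simp
  then obtain d where d: "d > 0" and H: "\<forall>(n::nat) (a::nat \<Rightarrow> real) b.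
        (\<forall>i<n. a i \<le> b i \<and> {a i..b i} \<subseteq> S) \<longrightarrow>
        (\<forall>i<n. \<forall>j<n. i \<noteq> j \<longrightarrow> b i \<le> a j \<or> b j \<le> a i) \<longrightarrow>
        (\<Sum>i<n. b i - a i) < d \<longrightarrow>
        (\<Sum>i<n. norm (f (b i) - f (a i))) < e/2"
    using assms(1)[unfolded ac_on_def, rule_format, OF e2] by blast
  define d' where "d' = min d (e / (2 * (M + 1)))"
  have d': "d' > 0" using d e assms(2) by (simp add: d'_def)
  show "\<exists>d>0. \<forall>(n::nat) (a::nat \<Rightarrow> real) b.
        (\<forall>i<n. a i \<le> b i \<and> {a i..b i} \<subseteq> S) \<longrightarrow>
        (\<forall>i<n. \<forall>j<n. i \<noteq> j \<longrightarrow> b i \<le> a j \<or> b j \<le> a i) \<longrightarrow>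
        (\<Sum>i<n. b i - a i) < d \<longrightarrow>
        (\<Sum>i<n. norm ((f (b i) - G (b i)) - (f (a i) - G (a i)))) < e"
  proof (intro exI[of _ d'] conjI d' allI impI)
    fix n :: nat and a b :: "nat \<Rightarrow> real"
    assume h: "\<forall>i<n. a i \<le> b i \<and> {a i..b i} \<subseteq> S"
      "\<forall>i<n. \<forall>j<n. i \<noteq> j \<longrightarrow> b i \<le> a j \<or> b j \<le> a i" "(\<Sum>i<n. b i - a i) < d'"
    have "(\<Sum>i<n. b i - a i) < d" using h(3) by (simp add: d'_def)
    hence A: "(\<Sum>i<n. norm (f (b i) - f (a i))) < e/2" using H h(1,2) by blast
    have Gb: "\<bar>G (b i) - G (a i)\<bar> \<le> M * (b i - a i)" if "i < n" for i
    proof -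
      have ab: "a i \<le> b i" "{a i..b i} \<subseteq> S" using h(1) that by auto
      hence "a i \<in> S" "b i \<in> S" "a i \<le> b i" by auto
      thus ?thesis using assms(3)[of "b i" "a i"] by simp
    qed
    have "(\<Sum>i<n. norm ((f (b i) - G (b i)) - (f (a i) - G (a i))))
        \<le> (\<Sum>i<n. norm (f (b i) - f (a i)) + M * (b i - a i))"
    proof (rule sum_mono)
      fix i assume "i \<in> {..<n}"
      hence "\<bar>G (b i) - G (a i)\<bar> \<le> M * (b i - a i)" using Gb by auto
      thus "norm ((f (b i) - G (b i)) - (f (a i) - G (a i))) \<le> norm (f (b i) - f (a i)) + M * (b i - a i)"
        by (simp add: abs_le_iff) linarith
    qed
    also have "\<dots> = (\<Sum>i<n. norm (f (b i) - f (a i))) + M * (\<Sum>i<n. b i - a i)"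
      by (simp add: sum.distrib sum_distrib_left)
    also have "M * (\<Sum>i<n. b i - a i) \<le> M * d'"
      using h(3) assms(2) by (intro mult_left_mono) auto
    also have "M * d' \<le> M * (e / (2 * (M + 1)))"
      using assms(2) by (intro mult_left_mono) (auto simp: d'_def)
    also have "M * (e / (2 * (M + 1))) \<le> e / 2"
      using assms(2) e by (simp add: field_simps)
    finally show "(\<Sum>i<n. norm ((f (b i) - G (b i)) - (f (a i) - G (a i)))) < e" using A by linarith
  qed
qed

lemma ac_on_cont:
  assumes "ac_on {a..b} f"
  shows "continuous_on {a..b} f"
  unfolding continuous_on_iff
proof (intro ballI allI impI)
  fix x e :: real assume x: "x \<in> {a..b}" and e: "e > 0"
  obtain d where d: "d > 0" and H: "\<forall>(n::nat) (aa::nat \<Rightarrow> real) bb.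
        (\<forall>i<n. aa i \<le> bb i \<and> {aa i..bb i} \<subseteq> {a..b}) \<longrightarrow>
        (\<forall>i<n. \<forall>j<n. i \<noteq> j \<longrightarrow> bb i \<le> aa j \<or> bb j \<le> aa i) \<longrightarrow>
        (\<Sum>i<n. bb i - aa i) < d \<longrightarrow>
        (\<Sum>i<n. norm (f (bb i) - f (aa i))) < e"
    using assms[unfolded ac_on_def, rule_format, OF e] by blast
  show "\<exists>d>0. \<forall>x'\<in>{a..b}. dist x' x < d \<longrightarrow> dist (f x') (f x) < e"
  proof (intro exI[of _ d] conjI d ballI impI)
    fix y assume y: "y \<in> {a..b}" and dy: "dist y x < d"
    define aa where "aa = (\<lambda>i::nat. min x y)"
    define bb where "bb = (\<lambda>i::nat. max x y)"
    have "(\<forall>i<1. aa i \<le> bb i \<and> {aa i..bb i} \<subseteq> {a..b})" using x y by (auto simp: aa_def bb_def)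
    moreover have "(\<forall>i<1. \<forall>j<1. i \<noteq> j \<longrightarrow> bb i \<le> aa j \<or> bb j \<le> aa i)" by auto
    moreover have "(\<Sum>i<1. bb i - aa i) < d" using dy by (auto simp: aa_def bb_def dist_real_def)
    ultimately have "(\<Sum>i<(1::nat). norm (f (bb i) - f (aa i))) < e" using H by blast
    thus "dist (f y) (f x) < e"
      by (cases "x \<le> y") (auto simp: aa_def bb_def dist_norm norm_minus_commute)
  qed
qed

lemma ac_deriv_lin:
  fixes f :: "real \<Rightarrow> real"
  assumes ac: "ac_on {a..b} f" and ab: "a \<le> b" and N: "negligible N"
    and d: "\<And>t. t \<in> {a..b} - N \<Longrightarrow> (f has_real_derivative c) (at t within {a..b})"
  shows "f b = f a + c * (b - a)"
proof -
  have ac2: "ac_on {a..b} (\<lambda>t. f t - c * t)"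
    by (rule ac_on_diff_lip[OF ac, of "\<bar>c\<bar>"]) (auto simp: abs_mult right_diff_distrib[symmetric])
  have "(\<lambda>t. f t - c * t) b = (\<lambda>t. f t - c * t) a"
  proof (rule ac_deriv0_const[OF ac2 ab N])
    fix t assume "t \<in> {a..b} - N"
    from d[OF this] show "((\<lambda>t. f t - c * t) has_real_derivative 0) (at t within {a..b})"
      by (auto intro!: derivative_eq_intros)
  qed
  thus ?thesis by (simp add: algebra_simps)
qed



lemma AE_negligible:
  assumes "AE t in lborel. P t"
  obtains N where "negligible N" "\<And>t. t \<notin> N \<Longrightarrow> P t"
proof -
  from assms obtain N where N: "{x \<in> space lborel. \<not> P x} \<subseteq> N" "emeasure lborel N = 0" "N \<in> sets lborel"
    by (rule AE_E)
  have "N \<in> null_sets lborel" using N by (simp add: null_setsI)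
  hence "negligible N" by (simp add: negligible_iff_null_sets null_sets_completionI)
  moreover have "\<And>t. t \<notin> N \<Longrightarrow> P t" using N(1) by auto
  ultimately show ?thesis using that by blast
qed

lemma sum12: "(\<Sum>i=1..2::nat. f i) = f 1 + (f 2 :: real)"
  by (simp add: numeral_2_eq_2)

lemma Y1: "Yfield 1 p = (1, 1, (fst (snd p))\<^sup>2)"
  by (cases p) (simp add: Yfield_def)
lemma Y1': "Yfield (Suc 0) p = (1, 1, (fst (snd p))\<^sup>2)"
  by (cases p) (simp add: Yfield_def)
lemma Y2: "Yfield 2 p = (1, -1, (fst (snd p))\<^sup>2)"
  by (cases p) (simp add: Yfield_def)

lemma sw1: "switching Yfield lam \<gamma> 1 t = fst (lam t) + fst (snd (lam t)) + snd (snd (lam t)) * (fst (snd (\<gamma> t)))\<^sup>2"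
  by (simp add: switching_def Y1 Y1' inner_prod_def)
lemma sw2: "switching Yfield lam \<gamma> 2 t = fst (lam t) - fst (snd (lam t)) + snd (snd (lam t)) * (fst (snd (\<gamma> t)))\<^sup>2"
  by (simp add: switching_def Y2 inner_prod_def)

lemma ham_eq: "ham 2 Yfield l p w = (w 1 + w 2) * (fst l + snd (snd l) * (fst (snd p))\<^sup>2) + (w 1 - w 2) * fst (snd l)"
  unfolding ham_def sum12 Y1 Y2 by (simp add: inner_prod_def algebra_simps)

lemma ham_dp: "((\<lambda>p. ham 2 Yfield l p w) has_derivative
   (\<lambda>v. (0, 2 * snd (snd l) * fst (snd p) * (w 1 + w 2), 0) \<bullet> v)) (at p)"
proof -
  have d1: "((\<lambda>p. (w 1 + w 2) * (fst l + snd (snd l) * (fst (snd p))\<^sup>2) + (w 1 - w 2) * fst (snd l)) has_derivative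
     (\<lambda>v. (w 1 + w 2) * (snd (snd l) * (2 * fst (snd p) * fst (snd v))))) (at p)"
    by (auto intro!: derivative_eq_intros simp: power2_eq_square algebra_simps)
  have eq: "(\<lambda>v. (w 1 + w 2) * (snd (snd l) * (2 * fst (snd p) * fst (snd v)))) =
     (\<lambda>v. (0, 2 * snd (snd l) * fst (snd p) * (w 1 + w 2), 0) \<bullet> v)"
    by (auto simp: inner_prod_def algebra_simps)
  show ?thesis unfolding ham_eq by (rule has_derivative_eq_rhs[OF d1 eq])
qed

lemma ham_dl: "((\<lambda>l. ham 2 Yfield l p w) has_derivative
   (\<lambda>v. (w 1 + w 2, w 1 - w 2, (w 1 + w 2) * (fst (snd p))\<^sup>2) \<bullet> v)) (at l)"
proof -
  have e: "(\<lambda>l. ham 2 Yfield l p w) = (\<lambda>l. l \<bullet> (w 1 + w 2, w 1 - w 2, (w 1 + w 2) * (fst (snd p))\<^sup>2))"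
    by (auto simp: ham_eq inner_prod_def algebra_simps)
  have "bounded_linear (\<lambda>l. l \<bullet> (w 1 + w 2, w 1 - w 2, (w 1 + w 2) * (fst (snd p))\<^sup>2))"
    by (rule bounded_linear_inner_left)
  hence "((\<lambda>l. l \<bullet> (w 1 + w 2, w 1 - w 2, (w 1 + w 2) * (fst (snd p))\<^sup>2)) has_derivative
     (\<lambda>l. l \<bullet> (w 1 + w 2, w 1 - w 2, (w 1 + w 2) * (fst (snd p))\<^sup>2))) (at l)"
    by (rule bounded_linear_imp_has_derivative)
  thus ?thesis unfolding e by (simp add: inner_commute)
qed

lemma inner_fun_eq: "(\<lambda>v. a \<bullet> v) = (\<lambda>v. b \<bullet> v) \<Longrightarrow> a = (b :: 'a :: real_inner)"
proof -
  assume h: "(\<lambda>v. a \<bullet> v) = (\<lambda>v. b \<bullet> v)"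
  have "a \<bullet> (a - b) = b \<bullet> (a - b)" using fun_cong[OF h, of "a - b"] .
  hence "(a - b) \<bullet> (a - b) = 0" by (simp add: inner_diff_left)
  thus "a = b" by simp
qed

lemma vd_fst: "(f has_vector_derivative v) F \<Longrightarrow> ((\<lambda>t. fst (f t)) has_real_derivative fst v) F"
  unfolding has_vector_derivative_def has_field_derivative_def
  apply (rule has_derivative_eq_rhs[OF has_derivative_fst], assumption)
  by (auto simp: mult.commute)
lemma vd_snd: "(f has_vector_derivative v) F \<Longrightarrow> ((\<lambda>t. snd (f t)) has_vector_derivative snd v) F"
  unfolding has_vector_derivative_def
  by (drule has_derivative_snd) simp

lemma point_derivs:
  assumes "((\<lambda>p. ham 2 Yfield (lam t) p w) has_derivative (\<lambda>v. gp \<bullet> v)) (at (\<gamma> t))"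
    and "((\<lambda>l. ham 2 Yfield l (\<gamma> t) w) has_derivative (\<lambda>v. gl \<bullet> v)) (at (lam t))"
    and "(lam has_vector_derivative - gp) (at t within S)"
    and "(\<gamma> has_vector_derivative gl) (at t within S)"
  shows "((\<lambda>s. fst (lam s)) has_real_derivative 0) (at t within S)"
    "((\<lambda>s. snd (snd (lam s))) has_real_derivative 0) (at t within S)"
    "((\<lambda>s. fst (snd (lam s))) has_real_derivative - (2 * snd (snd (lam t)) * fst (snd (\<gamma> t)) * (w 1 + w 2))) (at t within S)"
    "((\<lambda>s. fst (snd (\<gamma> s))) has_real_derivative (w 1 - w 2)) (at t within S)"
proof -
  have "gp = (0, 2 * snd (snd (lam t)) * fst (snd (\<gamma> t)) * (w 1 + w 2), 0)"
    using has_derivative_unique[OF assms(1) ham_dp] by (rule inner_fun_eq)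
  moreover have "gl = (w 1 + w 2, w 1 - w 2, (w 1 + w 2) * (fst (snd (\<gamma> t)))\<^sup>2)"
    using has_derivative_unique[OF assms(2) ham_dl] by (rule inner_fun_eq)
  ultimately have l: "(lam has_vector_derivative (0, - (2 * snd (snd (lam t)) * fst (snd (\<gamma> t)) * (w 1 + w 2)), 0)) (at t within S)"
    and g: "(\<gamma> has_vector_derivative (w 1 + w 2, w 1 - w 2, (w 1 + w 2) * (fst (snd (\<gamma> t)))\<^sup>2)) (at t within S)"
    using assms(3,4) by auto
  show "((\<lambda>s. fst (lam s)) has_real_derivative 0) (at t within S)" using vd_fst[OF l] by simp
  show "((\<lambda>s. snd (snd (lam s))) has_real_derivative 0) (at t within S)"
    using vd_snd[OF vd_snd[OF l]] by (simp add: has_real_derivative_iff_has_vector_derivative)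
  show "((\<lambda>s. fst (snd (lam s))) has_real_derivative - (2 * snd (snd (lam t)) * fst (snd (\<gamma> t)) * (w 1 + w 2))) (at t within S)"
    using vd_fst[OF vd_snd[OF l]] by simp
  show "((\<lambda>s. fst (snd (\<gamma> s))) has_real_derivative (w 1 - w 2)) (at t within S)"
    using vd_fst[OF vd_snd[OF g]] by simp
qed

lemma sign_lemma:
  fixes u1 u2 a b :: real
  assumes "\<bar>u1\<bar> \<le> 1" "\<bar>u2\<bar> \<le> 1" "u1 * a + u2 * b = \<bar>a\<bar> + \<bar>b\<bar>" "a \<noteq> 0"
  shows "u1 = sgn a"
proof -
  have "u1 * a \<le> \<bar>u1\<bar> * \<bar>a\<bar>" using abs_ge_self[of "u1 * a"] by (simp add: abs_mult)
  also have "\<bar>u1\<bar> * \<bar>a\<bar> \<le> \<bar>a\<bar>" using assms(1) by (intro mult_left_le_one_le) auto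
  finally have 1: "u1 * a \<le> \<bar>a\<bar>" .
  have "u2 * b \<le> \<bar>u2\<bar> * \<bar>b\<bar>" using abs_ge_self[of "u2 * b"] by (simp add: abs_mult)
  also have "\<bar>u2\<bar> * \<bar>b\<bar> \<le> \<bar>b\<bar>" using assms(2) by (intro mult_left_le_one_le) auto
  finally have 2: "u2 * b \<le> \<bar>b\<bar>" .
  have "u1 * a = \<bar>a\<bar>" using 1 2 assms(3) by linarith
  hence "u1 * a = sgn a * a" by (simp add: abs_sgn mult.commute)
  thus ?thesis using assms(4) by simp
qed

lemma sign_const:
  fixes f :: "real \<Rightarrow> real"
  assumes "continuous_on {c<..<d} f" "\<And>t. t \<in> {c<..<d} \<Longrightarrow> f t \<noteq> 0"
    and "t \<in> {c<..<d}" "s \<in> {c<..<d}"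
  shows "sgn (f t) = sgn (f s)"
proof -
  have main: "sgn (f x) = sgn (f y)" if "x \<in> {c<..<d}" "y \<in> {c<..<d}" "x \<le> y" for x y
  proof (rule ccontr)
    assume ne: "sgn (f x) \<noteq> sgn (f y)"
    have sub: "{x..y} \<subseteq> {c<..<d}" using that by auto
    have cont: "continuous_on {x..y} f" using continuous_on_subset[OF assms(1) sub] .
    have fx: "f x \<noteq> 0" "f y \<noteq> 0" using assms(2) that by auto
    have cs: "f x < 0 \<and> 0 < f y \<or> f y < 0 \<and> 0 < f x" using ne fx by (auto simp: sgn_if split: if_splits)
    obtain z where z: "x \<le> z" "z \<le> y" "f z = 0"
      using cs
    proof
      assume "f x < 0 \<and> 0 < f y"
      hence "f x \<le> 0" "0 \<le> f y" by auto
      from IVT'[where f=f and a=x and b=y and y=0, OF this \<open>x \<le> y\<close> cont]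
      show thesis using that by blast
    next
      assume "f y < 0 \<and> 0 < f x"
      hence "f y \<le> 0" "0 \<le> f x" by auto
      from IVT2'[where f=f and a=x and b=y and y=0, OF this \<open>x \<le> y\<close> cont]
      show thesis using that by blast
    qed
    thus False using assms(2) sub by auto
  qed
  show ?thesis
  proof (cases "t \<le> s")
    case True
    show ?thesis by (rule main[OF assms(3,4) True])
  next
    case False
    hence "s \<le> t" by simp
    from main[OF assms(4,3) this] show ?thesis by simp
  qed
qed

lemma ac_deriv_lin':
  fixes f :: "real \<Rightarrow> real"
  assumes ac: "ac_on {c..d} f" and cd: "c \<le> d" and N: "negligible N"
    and t0: "t0 = c \<or> t0 = d" and t: "t \<in> {c..d}"
    and der: "\<And>t. t \<in> {c..d} - N \<Longrightarrow> (f has_real_derivative s) (at t within {c..d})"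
  shows "f t = f t0 + s * (t - t0)"
  using t0
proof
  assume h: "t0 = c"
  have "f t = f c + s * (t - c)"
  proof (rule ac_deriv_lin[OF ac_on_mono[OF ac] _ N])
    show "{c..t} \<subseteq> {c..d}" using t by auto
    show "c \<le> t" using t by auto
    fix x assume "x \<in> {c..t} - N"
    hence "x \<in> {c..d} - N" using t by auto
    from DERIV_subset[OF der[OF this], of "{c..t}"] t
    show "(f has_real_derivative s) (at x within {c..t})" by auto
  qed
  thus ?thesis using h by simp
next
  assume h: "t0 = d"
  have "f d = f t + s * (d - t)"
  proof (rule ac_deriv_lin[OF ac_on_mono[OF ac] _ N])
    show "{t..d} \<subseteq> {c..d}" using t by auto
    show "t \<le> d" using t by auto
    fix x assume "x \<in> {t..d} - N"
    hence "x \<in> {c..d} - N" using t by auto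
    from DERIV_subset[OF der[OF this], of "{t..d}"] t
    show "(f has_real_derivative s) (at x within {t..d})" by auto
  qed
  thus ?thesis using h by (simp add: algebra_simps)
qed

lemma deriv_quad_bound:
  fixes f :: "real \<Rightarrow> real"
  assumes e: "e > 0" and b: "\<And>t. \<bar>t - t0\<bar> < e \<Longrightarrow> \<bar>f t\<bar> \<le> C * (t - t0)\<^sup>2"
  shows "(f has_real_derivative 0) (at t0)"
proof -
  have f0: "f t0 = 0" using b[of t0] e by simp
  have "((\<lambda>y. (f y - f t0) / (y - t0)) \<longlongrightarrow> 0) (at t0)"
  proof (rule Lim_null_comparison)
    have H: "\<forall>y. y \<noteq> t0 \<and> dist y t0 < e \<longrightarrow> norm ((f y - f t0) / (y - t0)) \<le> \<bar>C\<bar> * \<bar>y - t0\<bar>"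
    proof (intro allI impI)
      fix y :: real assume "y \<noteq> t0 \<and> dist y t0 < e"
      hence y: "y \<noteq> t0" "\<bar>y - t0\<bar> < e" by (auto simp: dist_real_def)
      have "\<bar>f y\<bar> \<le> C * (y - t0)\<^sup>2" using b y by auto
      also have "\<dots> \<le> \<bar>C\<bar> * (y - t0)\<^sup>2" by (rule mult_right_mono) auto
      also have "\<dots> = \<bar>C\<bar> * \<bar>y - t0\<bar> * \<bar>y - t0\<bar>" by (simp add: power2_eq_square mult.assoc)
      finally have "\<bar>f y\<bar> / \<bar>y - t0\<bar> \<le> \<bar>C\<bar> * \<bar>y - t0\<bar>" using y by (simp add: divide_le_eq)
      thus "norm ((f y - f t0) / (y - t0)) \<le> \<bar>C\<bar> * \<bar>y - t0\<bar>" by (simp add: f0)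
    qed
    show "eventually (\<lambda>y. norm ((f y - f t0) / (y - t0)) \<le> \<bar>C\<bar> * \<bar>y - t0\<bar>) (at t0)"
      unfolding eventually_at
    proof (rule exI[of _ e], intro conjI e ballI impI)
      fix y :: real assume "y \<noteq> t0 \<and> dist y t0 < e"
      then show "norm ((f y - f t0) / (y - t0)) \<le> \<bar>C\<bar> * \<bar>y - t0\<bar>" using H[rule_format] by simp
    qed
    have "((\<lambda>y. \<bar>C\<bar> * \<bar>y - t0\<bar>) \<longlongrightarrow> \<bar>C\<bar> * \<bar>t0 - t0\<bar>) (at t0)"
      by (intro tendsto_intros)
    thus "((\<lambda>y. \<bar>C\<bar> * \<bar>y - t0\<bar>) \<longlongrightarrow> 0) (at t0)" by simp
  qed
  thus ?thesis by (simp add: has_field_derivative_iff)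
qed


lemma nfst: "norm (fst x - fst y) \<le> norm (x - y)"
  by (metis fst_diff norm_fst_le prod.collapse)
lemma nsnd: "norm (snd x - snd y) \<le> norm (x - y)"
  by (metis snd_diff norm_snd_le prod.collapse)

lemma zero_on_closure:
  fixes f :: "real \<Rightarrow> real"
  assumes "continuous_on {a..b} f" "a < b" "\<And>t. t \<in> {a<..<b} \<Longrightarrow> f t = 0" "t \<in> {a..b}"
  shows "f t = 0"
proof -
  have cl: "closed {x \<in> {a..b}. f x = 0}"
    by (rule continuous_closed_preimage_constant[OF assms(1)]) simp
  have "{a<..<b} \<subseteq> {x \<in> {a..b}. f x = 0}" using assms(3) by auto
  hence "closure {a<..<b} \<subseteq> {x \<in> {a..b}. f x = 0}" using cl by (rule closure_minimal)
  thus ?thesis using assms(2,4) by auto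
qed



theorem mainTheorem13:
  fixes T t0 \<epsilon> :: real and lam \<gamma> :: "real \<Rightarrow> R3" and u :: "real \<Rightarrow> nat \<Rightarrow> real"
    and j :: nat and I :: "real set"
  assumes ext: "extremal_pair 2 Yfield T lam \<gamma> u"
    and j: "j \<in> {1, 2}"
    and eps: "\<epsilon> > 0" "{t0 - \<epsilon><..<t0 + \<epsilon>} \<subseteq> {0..T}"
    and arcs: "(I = {t0 - \<epsilon><..<t0} \<and> singular_arc Yfield lam \<gamma> j {t0<..<t0 + \<epsilon>})
             \<or> (I = {t0<..<t0 + \<epsilon>} \<and> singular_arc Yfield lam \<gamma> j {t0 - \<epsilon><..<t0})"
    and reg: "regular_arc 2 Yfield lam \<gamma> I"
  shows "(\<exists>a b c. a \<noteq> 0 \<and> (\<forall>t\<in>I. switching Yfield lam \<gamma> j t = a * t\<^sup>2 + b * t + c))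
       \<and> (switching Yfield lam \<gamma> j has_real_derivative 0) (at t0)"
proof -
  define L1 where "L1 = (\<lambda>s. fst (lam s))"
  define L2 where "L2 = (\<lambda>s. fst (snd (lam s)))"
  define L3 where "L3 = (\<lambda>s. snd (snd (lam s)))"
  define Yc where "Yc = (\<lambda>s. fst (snd (\<gamma> s)))"
  define \<sigma> :: real where "\<sigma> = (if j = 1 then 1 else -1)"
  define \<phi> where "\<phi> = switching Yfield lam \<gamma> j"
  define sw1 where "sw1 = switching Yfield lam \<gamma> 1"
  define sw2 where "sw2 = switching Yfield lam \<gamma> 2"
  have phi_fun: "\<phi> = (\<lambda>s. L1 s + \<sigma> * L2 s + L3 s * (Yc s)\<^sup>2)"
  proof (rule HOL.ext)
    fix s
    show "\<phi> s = L1 s + \<sigma> * L2 s + L3 s * (Yc s)\<^sup>2"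
    proof (cases "j = 1")
      case True
      thus ?thesis using sw1[of lam \<gamma> s] by (simp add: \<phi>_def \<sigma>_def L1_def L2_def L3_def Yc_def)
    next
      case False
      hence "j = 2" using j by auto
      thus ?thesis using sw2[of lam \<gamma> s] by (simp add: \<phi>_def \<sigma>_def L1_def L2_def L3_def Yc_def)
    qed
  qed
  have sw1_fun: "sw1 = (\<lambda>s. L1 s + L2 s + L3 s * (Yc s)\<^sup>2)"
    using sw1[of lam \<gamma>] by (auto simp: sw1_def L1_def L2_def L3_def Yc_def)
  have sw2_fun: "sw2 = (\<lambda>s. L1 s - L2 s + L3 s * (Yc s)\<^sup>2)"
    using sw2[of lam \<gamma>] by (auto simp: sw2_def L1_def L2_def L3_def Yc_def)
  have phi_sw: "\<phi> s = (if j = 1 then sw1 s else sw2 s)" for s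
    using j by (auto simp: \<phi>_def sw1_def sw2_def)

  obtain c0 where AE3: "AE t in lborel. t \<in> {0..T} \<longrightarrow>
        (\<Sum>i=1..2. u t i * (lam t \<bullet> Yfield i (\<gamma> t))) = c0 \<and>
        (\<Sum>i=1..2. \<bar>lam t \<bullet> Yfield i (\<gamma> t)\<bar>) = c0"
    using ext unfolding extremal_pair_def by blast
  have AE2: "AE t in lborel. t \<in> {0..T} \<longrightarrow>
        (\<exists>gp gl.
           ((\<lambda>p. ham 2 Yfield (lam t) p (u t)) has_derivative (\<lambda>v. gp \<bullet> v)) (at (\<gamma> t)) \<and>
           ((\<lambda>l. ham 2 Yfield l (\<gamma> t) (u t)) has_derivative (\<lambda>v. gl \<bullet> v)) (at (lam t)) \<and>
           (lam has_vector_derivative (- gp)) (at t within {0..T}) \<and>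
           (\<gamma> has_vector_derivative gl) (at t within {0..T}))"
    using ext unfolding extremal_pair_def by blast
  have acl: "ac_on {0..T} lam" using ext unfolding extremal_pair_def by blast
  have adm: "admissible 2 Yfield T \<gamma> u" using ext unfolding extremal_pair_def by blast
  have acg: "ac_on {0..T} \<gamma>" and T0: "0 \<le> T" using adm unfolding admissible_def by blast+
  have AE1': "AE t in lborel. t \<in> {0..T} \<longrightarrow>
        (\<forall>i\<in>{1..2::nat}. \<bar>u t i\<bar> \<le> 1) \<and>
        (\<gamma> has_vector_derivative (\<Sum>i=1..2. u t i *\<^sub>R Yfield i (\<gamma> t))) (at t within {0..T})"
    using adm unfolding admissible_def by blast
  have AE1: "AE t in lborel. t \<in> {0..T} \<longrightarrow> (\<forall>i\<in>{1..2::nat}. \<bar>u t i\<bar> \<le> 1)"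
    using AE1' by (rule eventually_mono) blast

  have AEall: "AE t in lborel. t \<in> {0..T} \<longrightarrow> \<bar>u t 1\<bar> \<le> 1 \<and> \<bar>u t 2\<bar> \<le> 1 \<and>
     (L1 has_real_derivative 0) (at t within {0..T}) \<and>
     (L3 has_real_derivative 0) (at t within {0..T}) \<and>
     (L2 has_real_derivative - (2 * L3 t * Yc t * (u t 1 + u t 2))) (at t within {0..T}) \<and>
     (Yc has_real_derivative (u t 1 - u t 2)) (at t within {0..T}) \<and>
     u t 1 * sw1 t + u t 2 * sw2 t = c0 \<and> \<bar>sw1 t\<bar> + \<bar>sw2 t\<bar> = c0"
    using AE1 AE2 AE3
  proof eventually_elim
    case (elim t)
    show ?case
    proof
      assume t: "t \<in> {0..T}"
      have u: "\<bar>u t 1\<bar> \<le> 1" "\<bar>u t 2\<bar> \<le> 1" using elim(1) t by auto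
      from elim(2) t obtain gp gl where
        g1: "((\<lambda>p. ham 2 Yfield (lam t) p (u t)) has_derivative (\<lambda>v. gp \<bullet> v)) (at (\<gamma> t))" and
        g2: "((\<lambda>l. ham 2 Yfield l (\<gamma> t) (u t)) has_derivative (\<lambda>v. gl \<bullet> v)) (at (lam t))" and
        g3: "(lam has_vector_derivative (- gp)) (at t within {0..T})" and
        g4: "(\<gamma> has_vector_derivative gl) (at t within {0..T})"
        by blast
      note pd = point_derivs[OF g1 g2 g3 g4]
      have e: "u t 1 * sw1 t + u t 2 * sw2 t = c0 \<and> \<bar>sw1 t\<bar> + \<bar>sw2 t\<bar> = c0"
        using elim(3)[unfolded sum12] t by (simp add: sw1_def sw2_def switching_def)
      show "\<bar>u t 1\<bar> \<le> 1 \<and> \<bar>u t 2\<bar> \<le> 1 \<and>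
       (L1 has_real_derivative 0) (at t within {0..T}) \<and>
       (L3 has_real_derivative 0) (at t within {0..T}) \<and>
       (L2 has_real_derivative - (2 * L3 t * Yc t * (u t 1 + u t 2))) (at t within {0..T}) \<and>
       (Yc has_real_derivative (u t 1 - u t 2)) (at t within {0..T}) \<and>
       u t 1 * sw1 t + u t 2 * sw2 t = c0 \<and> \<bar>sw1 t\<bar> + \<bar>sw2 t\<bar> = c0"
        unfolding L1_def L2_def L3_def Yc_def using u pd e by simp
    qed
  qed
  obtain N where N: "negligible N" and G: "\<And>t. t \<notin> N \<Longrightarrow> t \<in> {0..T} \<longrightarrow> \<bar>u t 1\<bar> \<le> 1 \<and> \<bar>u t 2\<bar> \<le> 1 \<and>
     (L1 has_real_derivative 0) (at t within {0..T}) \<and>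
     (L3 has_real_derivative 0) (at t within {0..T}) \<and>
     (L2 has_real_derivative - (2 * L3 t * Yc t * (u t 1 + u t 2))) (at t within {0..T}) \<and>
     (Yc has_real_derivative (u t 1 - u t 2)) (at t within {0..T}) \<and>
     u t 1 * sw1 t + u t 2 * sw2 t = c0 \<and> \<bar>sw1 t\<bar> + \<bar>sw2 t\<bar> = c0"
    using AE_negligible[OF AEall] by blast
  have Gu1: "\<bar>u t 1\<bar> \<le> 1" and Gu2: "\<bar>u t 2\<bar> \<le> 1"
    and GL1: "(L1 has_real_derivative 0) (at t within {0..T})"
    and GL3: "(L3 has_real_derivative 0) (at t within {0..T})"
    and GL2: "(L2 has_real_derivative - (2 * L3 t * Yc t * (u t 1 + u t 2))) (at t within {0..T})"
    and GY: "(Yc has_real_derivative (u t 1 - u t 2)) (at t within {0..T})"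
    and GE1: "u t 1 * sw1 t + u t 2 * sw2 t = c0" and GE2: "\<bar>sw1 t\<bar> + \<bar>sw2 t\<bar> = c0"
    if "t \<in> {0..T}" "t \<notin> N" for t
    using G[OF that(2)] that(1) by blast+

  have "\<exists>ra rb sa sb. I = {ra<..<rb} \<and> ra < rb \<and> singular_arc Yfield lam \<gamma> j {sa<..<sb} \<and> sa < sb \<and>
      (t0 = ra \<or> t0 = rb) \<and> (t0 = sa \<or> t0 = sb) \<and>
      {ra..rb} \<subseteq> {t0-\<epsilon>..t0+\<epsilon>} \<and> {sa..sb} \<subseteq> {t0-\<epsilon>..t0+\<epsilon>} \<and>
      (\<forall>t. \<bar>t - t0\<bar> < \<epsilon> \<longrightarrow> t \<in> {ra..rb} \<union> {sa..sb})"
    using arcs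
  proof (elim disjE conjE)
    assume "I = {t0 - \<epsilon><..<t0}" "singular_arc Yfield lam \<gamma> j {t0<..<t0 + \<epsilon>}"
    thus ?thesis using eps(1)
      by (intro exI[of _ "t0-\<epsilon>"] exI[of _ t0] exI[of _ t0] exI[of _ "t0+\<epsilon>"]) (auto simp: abs_less_iff)
  next
    assume "I = {t0<..<t0 + \<epsilon>}" "singular_arc Yfield lam \<gamma> j {t0 - \<epsilon><..<t0}"
    thus ?thesis using eps(1)
      by (intro exI[of _ t0] exI[of _ "t0+\<epsilon>"] exI[of _ "t0-\<epsilon>"] exI[of _ t0]) (auto simp: abs_less_iff)
  qed
  then obtain ra rb sa sb where RI: "I = {ra<..<rb}" and rab: "ra < rb"
    and sing: "singular_arc Yfield lam \<gamma> j {sa<..<sb}" and sab: "sa < sb"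
    and t0r: "t0 = ra \<or> t0 = rb" and t0s: "t0 = sa \<or> t0 = sb"
    and rsub: "{ra..rb} \<subseteq> {t0-\<epsilon>..t0+\<epsilon>}" and ssub: "{sa..sb} \<subseteq> {t0-\<epsilon>..t0+\<epsilon>}"
    and cover: "\<And>t. \<bar>t - t0\<bar> < \<epsilon> \<Longrightarrow> t \<in> {ra..rb} \<union> {sa..sb}"
    by blast

  define K where "K = {t0-\<epsilon>..t0+\<epsilon>}"
  have Ksub: "K \<subseteq> {0..T}"
  proof -
    have "closure {t0-\<epsilon><..<t0+\<epsilon>} \<subseteq> closure {0..T}" using eps(2) by (rule closure_mono)
    thus ?thesis using eps(1) by (simp add: K_def)
  qed
  have Kint: "{t0-\<epsilon><..<t0+\<epsilon>} \<subseteq> interior {0..T}"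
    using eps(2) by (intro interior_maximal) auto
  have t0K: "t0 \<in> K" using eps(1) by (simp add: K_def)
  have rK: "t \<in> K" if "t \<in> {ra..rb}" for t using rsub that by (auto simp: K_def)
  have sK: "t \<in> K" if "t \<in> {sa..sb}" for t using ssub that by (auto simp: K_def)
  have sint: "t \<in> interior {0..T}" if "t \<in> {sa<..<sb}" for t
  proof -
    have "sa \<ge> t0 - \<epsilon>" "sb \<le> t0 + \<epsilon>" using ssub sab by auto
    hence "t \<in> {t0-\<epsilon><..<t0+\<epsilon>}" using that by auto
    thus ?thesis using Kint by blast
  qed

  have acL1: "ac_on {0..T} L1" unfolding L1_def by (rule ac_on_comp_lip[OF acl nfst])
  have acL3: "ac_on {0..T} L3" unfolding L3_def
    by (rule ac_on_comp_lip[OF acl]) (rule order_trans[OF nsnd nsnd])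
  have acL2: "ac_on {0..T} L2" unfolding L2_def
    by (rule ac_on_comp_lip[OF acl]) (rule order_trans[OF nfst nsnd])
  have acY: "ac_on {0..T} Yc" unfolding Yc_def
    by (rule ac_on_comp_lip[OF acg]) (rule order_trans[OF nfst nsnd])
  have cL1: "continuous_on {0..T} L1" by (rule ac_on_cont[OF acL1])
  have cL2: "continuous_on {0..T} L2" by (rule ac_on_cont[OF acL2])
  have cL3: "continuous_on {0..T} L3" by (rule ac_on_cont[OF acL3])
  have cY: "continuous_on {0..T} Yc" by (rule ac_on_cont[OF acY])
  have cphi: "continuous_on {0..T} \<phi>" unfolding phi_fun
    by (intro continuous_intros cL1 cL2 cL3 cY)
  have csw1: "continuous_on {0..T} sw1" unfolding sw1_fun
    by (intro continuous_intros cL1 cL2 cL3 cY)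
  have csw2: "continuous_on {0..T} sw2" unfolding sw2_fun
    by (intro continuous_intros cL1 cL2 cL3 cY)

  have lin: "F t = F t0' + s * (t - t0')"
    if "ac_on {0..T} F" "{c..d} \<subseteq> {0..T}" "c \<le> d" "t0' = c \<or> t0' = d" "t \<in> {c..d}"
       "\<And>x. x \<in> {c..d} \<Longrightarrow> x \<notin> N \<Longrightarrow> x \<noteq> c \<Longrightarrow> x \<noteq> d \<Longrightarrow> (F has_real_derivative s) (at x within {0..T})"
    for F :: "real \<Rightarrow> real" and c d t0' t s
  proof (rule ac_deriv_lin'[where N = "N \<union> {c, d}"])
    show "ac_on {c..d} F" using ac_on_mono[OF that(1,2)] .
    show "c \<le> d" "t0' = c \<or> t0' = d" "t \<in> {c..d}" by fact+
    show "negligible (N \<union> {c, d})" using N by simp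
    fix x assume "x \<in> {c..d} - (N \<union> {c, d})"
    hence x: "x \<in> {c..d}" "x \<notin> N" "x \<noteq> c" "x \<noteq> d" by auto
    show "(F has_real_derivative s) (at x within {c..d})"
      using DERIV_subset[OF that(6)[OF x] that(2)] .
  qed

  define p1 where "p1 = L1 (t0 - \<epsilon>)"
  define p3 where "p3 = L3 (t0 - \<epsilon>)"
  have L1c: "L1 t = p1" if "t \<in> K" for t
  proof -
    have "L1 t = L1 (t0 - \<epsilon>) + 0 * (t - (t0 - \<epsilon>))"
    proof (rule lin[OF acL1 Ksub[unfolded K_def]])
      show "t0 - \<epsilon> \<le> t0 + \<epsilon>" using eps(1) by simp
      show "t0 - \<epsilon> = t0 - \<epsilon> \<or> t0 - \<epsilon> = t0 + \<epsilon>" by simp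
      show "t \<in> {t0 - \<epsilon>..t0 + \<epsilon>}" using that by (simp add: K_def)
      fix x assume x: "x \<in> {t0 - \<epsilon>..t0 + \<epsilon>}" "x \<notin> N"
      hence "x \<in> {0..T}" using Ksub by (auto simp: K_def)
      thus "(L1 has_real_derivative 0) (at x within {0..T})" using GL1 x(2) by blast
    qed
    thus ?thesis by (simp add: p1_def)
  qed
  have L3c: "L3 t = p3" if "t \<in> K" for t
  proof -
    have "L3 t = L3 (t0 - \<epsilon>) + 0 * (t - (t0 - \<epsilon>))"
    proof (rule lin[OF acL3 Ksub[unfolded K_def]])
      show "t0 - \<epsilon> \<le> t0 + \<epsilon>" using eps(1) by simp
      show "t0 - \<epsilon> = t0 - \<epsilon> \<or> t0 - \<epsilon> = t0 + \<epsilon>" by simp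
      show "t \<in> {t0 - \<epsilon>..t0 + \<epsilon>}" using that by (simp add: K_def)
      fix x assume x: "x \<in> {t0 - \<epsilon>..t0 + \<epsilon>}" "x \<notin> N"
      hence "x \<in> {0..T}" using Ksub by (auto simp: K_def)
      thus "(L3 has_real_derivative 0) (at x within {0..T})" using GL3 x(2) by blast
    qed
    thus ?thesis by (simp add: p3_def)
  qed

  have "\<not> I \<subseteq> N"
  proof
    assume "I \<subseteq> N"
    hence "negligible I" using N negligible_subset by blast
    moreover have "open I" "I \<noteq> {}" using RI rab by auto
    ultimately show False using open_not_negligible by blast
  qed
  then obtain tI where tI: "tI \<in> I" "tI \<notin> N" by blast
  have tIr: "tI \<in> {ra..rb}" using tI RI by auto
  have tIT: "tI \<in> {0..T}" using rK[OF tIr] Ksub by auto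
  have regI: "sw1 t \<noteq> 0" "sw2 t \<noteq> 0" if "t \<in> I" for t
    using reg that unfolding regular_arc_def sw1_def sw2_def by auto
  have phiI: "\<phi> t \<noteq> 0" if "t \<in> I" for t using regI[OF that] phi_sw by auto
  have c0pos: "c0 > 0" using GE2[OF tIT tI(2)] regI[OF tI(1)] by linarith

  have phiJ: "\<phi> t = 0" if "t \<in> {sa<..<sb}" for t
    using sing that unfolding singular_arc_def \<phi>_def by auto
  have sT: "t \<in> {0..T}" if "t \<in> {sa..sb}" for t using sK[OF that] Ksub by auto
  have phit0: "\<phi> t0 = 0"
    by (rule zero_on_closure[OF continuous_on_subset[OF cphi] sab phiJ]) (use sT t0s sab in auto)

  have p3nz: "p3 \<noteq> 0"
  proof
    assume p30: "p3 = 0"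
    have L2c: "L2 t = L2 (t0 - \<epsilon>)" if "t \<in> K" for t
    proof -
      have "L2 t = L2 (t0 - \<epsilon>) + 0 * (t - (t0 - \<epsilon>))"
      proof (rule lin[OF acL2 Ksub[unfolded K_def]])
        show "t0 - \<epsilon> \<le> t0 + \<epsilon>" using eps(1) by simp
        show "t0 - \<epsilon> = t0 - \<epsilon> \<or> t0 - \<epsilon> = t0 + \<epsilon>" by simp
        show "t \<in> {t0 - \<epsilon>..t0 + \<epsilon>}" using that by (simp add: K_def)
        fix x assume x: "x \<in> {t0 - \<epsilon>..t0 + \<epsilon>}" "x \<notin> N"
        hence "x \<in> {0..T}" "L3 x = 0" using Ksub L3c p30 by (auto simp: K_def)
        thus "(L2 has_real_derivative 0) (at x within {0..T})" using GL2[of x] x by simp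
      qed
      thus ?thesis by simp
    qed
    have "\<phi> t = p1 + \<sigma> * L2 (t0 - \<epsilon>)" if "t \<in> K" for t
      using L1c[OF that] L2c[OF that] L3c[OF that] p30 by (simp add: phi_fun)
    hence "\<phi> tI = \<phi> t0" using rK[OF tIr] t0K by simp
    thus False using phit0 phiI[OF tI(1)] by simp
  qed

  have Yz: "Yc t = 0" if t: "t \<in> {sa<..<sb}" "t \<notin> N" for t
  proof -
    have tT: "t \<in> {0..T}" using sT t by auto
    have tint: "t \<in> interior {0..T}" using sint t by auto
    have d0: "(\<phi> has_real_derivative 0) (at t)"
      by (rule has_field_derivative_transform_within_open[OF DERIV_const, where a=t and S="{sa<..<sb}"])
         (use t phiJ in auto)
    have d1: "(\<phi> has_real_derivative (\<sigma> * (- (2 * L3 t * Yc t * (u t 1 + u t 2))) + L3 t * (2 * Yc t * (u t 1 - u t 2)))) (at t within {0..T})"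
      unfolding phi_fun using GL1[OF tT t(2)] GL2[OF tT t(2)] GL3[OF tT t(2)] GY[OF tT t(2)]
      by (auto intro!: derivative_eq_intros)
    hence d1': "(\<phi> has_real_derivative (\<sigma> * (- (2 * L3 t * Yc t * (u t 1 + u t 2))) + L3 t * (2 * Yc t * (u t 1 - u t 2)))) (at t)"
      using at_within_interior[OF tint] by simp
    have eq: "\<sigma> * (- (2 * p3 * Yc t * (u t 1 + u t 2))) + p3 * (2 * Yc t * (u t 1 - u t 2)) = 0"
      using DERIV_unique[OF d1' d0] L3c[of t] sK t by auto
    have ph0: "\<phi> t = 0" using phiJ t by auto
    show ?thesis
    proof (cases "j = 1")
      case True
      hence "sw1 t = 0" using ph0 phi_sw by simp
      hence "u t 2 * sw2 t = c0" using GE1[OF tT t(2)] by simp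
      hence u2: "u t 2 \<noteq> 0" using c0pos by auto
      have "p3 * Yc t * u t 2 = 0" using eq True by (simp add: \<sigma>_def algebra_simps)
      thus ?thesis using u2 p3nz by simp
    next
      case False
      hence "sw2 t = 0" using ph0 phi_sw by simp
      hence "u t 1 * sw1 t = c0" using GE1[OF tT t(2)] by simp
      hence u1: "u t 1 \<noteq> 0" using c0pos by auto
      have "p3 * Yc t * u t 1 = 0" using eq False by (simp add: \<sigma>_def algebra_simps)
      thus ?thesis using u1 p3nz by simp
    qed
  qed
  have YJ: "Yc t = 0" if "t \<in> {sa<..<sb}" for t
  proof (rule ccontr)
    assume ne: "Yc t \<noteq> 0"
    define B where "B = {sa<..<sb} \<inter> Yc -` (- {0})"
    have "{sa<..<sb} \<subseteq> {0..T}" using sT by fastforce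
    hence "continuous_on {sa<..<sb} Yc" using continuous_on_subset[OF cY] by blast
    hence "\<forall>B. open B \<longrightarrow> open (Yc -` B \<inter> {sa<..<sb})"
      using continuous_on_open_vimage[of "{sa<..<sb}" Yc] by auto
    moreover have "open (- {0::real})" by auto
    ultimately have "open (Yc -` (- {0}) \<inter> {sa<..<sb})" by blast
    hence "open B" unfolding B_def by (simp add: Int_commute)
    moreover have "B \<noteq> {}" using that ne by (auto simp: B_def)
    moreover have "B \<subseteq> N" using Yz by (auto simp: B_def)
    ultimately show False using open_not_negligible negligible_subset[OF N] by blast
  qed
  have Yt0: "Yc t0 = 0"
    by (rule zero_on_closure[OF continuous_on_subset[OF cY] sab YJ]) (use sT t0s sab in auto)

  define s1 where "s1 = sgn (sw1 tI)"
  define s2 where "s2 = sgn (sw2 tI)"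
  have IT: "t \<in> {0..T}" if "t \<in> I" for t
  proof -
    have "t \<in> {ra..rb}" using that RI by auto
    thus ?thesis using rK Ksub by blast
  qed
  have ISub: "{ra<..<rb} \<subseteq> {0..T}" by (intro subsetI IT) (simp add: RI)
  have cswI1: "continuous_on {ra<..<rb} sw1" by (rule continuous_on_subset[OF csw1 ISub])
  have cswI2: "continuous_on {ra<..<rb} sw2" by (rule continuous_on_subset[OF csw2 ISub])
  have u1c: "u t 1 = s1" if "t \<in> I" "t \<notin> N" for t
  proof -
    have e1: "u t 1 * sw1 t + u t 2 * sw2 t = \<bar>sw1 t\<bar> + \<bar>sw2 t\<bar>"
      using GE1[OF IT[OF that(1)] that(2)] GE2[OF IT[OF that(1)] that(2)] by linarith
    have "u t 1 = sgn (sw1 t)"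
      by (rule sign_lemma[OF Gu1[OF IT[OF that(1)] that(2)] Gu2[OF IT[OF that(1)] that(2)] e1 regI(1)[OF that(1)]])
    also have "\<dots> = s1" unfolding s1_def
      by (rule sign_const[OF cswI1]) (use regI RI that tI in auto)
    finally show ?thesis .
  qed
  have u2c: "u t 2 = s2" if "t \<in> I" "t \<notin> N" for t
  proof -
    have e1: "u t 2 * sw2 t + u t 1 * sw1 t = \<bar>sw2 t\<bar> + \<bar>sw1 t\<bar>"
      using GE1[OF IT[OF that(1)] that(2)] GE2[OF IT[OF that(1)] that(2)] by linarith
    have "u t 2 = sgn (sw2 t)"
      by (rule sign_lemma[OF Gu2[OF IT[OF that(1)] that(2)] Gu1[OF IT[OF that(1)] that(2)] e1 regI(2)[OF that(1)]])
    also have "\<dots> = s2" unfolding s2_def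
      by (rule sign_const[OF cswI2]) (use regI RI that tI in auto)
    finally show ?thesis .
  qed
  have s1v: "s1 = 1 \<or> s1 = -1" using regI[OF tI(1)] by (auto simp: s1_def sgn_if)
  have s2v: "s2 = 1 \<or> s2 = -1" using regI[OF tI(1)] by (auto simp: s2_def sgn_if)
  have rT: "{ra..rb} \<subseteq> {0..T}" using rK Ksub by blast
  have rI: "x \<in> I" if "x \<in> {ra..rb}" "x \<noteq> ra" "x \<noteq> rb" for x using that RI by auto
  have L1r: "L1 t = p1" and L3r: "L3 t = p3" if "t \<in> {ra..rb}" for t using L1c L3c rK that by auto

  have s12: "s2 = - s1"
  proof (rule ccontr)
    assume "s2 \<noteq> - s1"
    hence ss: "s1 = s2" using s1v s2v by auto
    have Yr: "Yc t = 0" if "t \<in> {ra..rb}" for t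
    proof -
      have "Yc t = Yc t0 + 0 * (t - t0)"
      proof (rule lin[OF acY rT less_imp_le[OF rab] t0r that])
        fix x assume x: "x \<in> {ra..rb}" "x \<notin> N" "x \<noteq> ra" "x \<noteq> rb"
        show "(Yc has_real_derivative 0) (at x within {0..T})"
          using GY[of x] x rT u1c[OF rI[OF x(1,3,4)] x(2)] u2c[OF rI[OF x(1,3,4)] x(2)] ss by auto
      qed
      thus ?thesis using Yt0 by simp
    qed
    have L2r: "L2 t = L2 t0" if "t \<in> {ra..rb}" for t
    proof -
      have "L2 t = L2 t0 + 0 * (t - t0)"
      proof (rule lin[OF acL2 rT less_imp_le[OF rab] t0r that])
        fix x assume x: "x \<in> {ra..rb}" "x \<notin> N" "x \<noteq> ra" "x \<noteq> rb"
        show "(L2 has_real_derivative 0) (at x within {0..T})"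
          using GL2[of x] x rT Yr[OF x(1)] by auto
      qed
      thus ?thesis by simp
    qed
    have t0r': "t0 \<in> {ra..rb}" using t0r rab by auto
    have "\<phi> tI = \<phi> t0"
      unfolding phi_fun using L1r[OF tIr] L1r[OF t0r'] L2r[OF tIr] Yr[OF tIr] Yr[OF t0r'] by simp
    thus False using phit0 phiI[OF tI(1)] by simp
  qed

  have t0r': "t0 \<in> {ra..rb}" using t0r rab by auto
  have L2r: "L2 t = L2 t0" if "t \<in> {ra..rb}" for t
  proof -
    have "L2 t = L2 t0 + 0 * (t - t0)"
    proof (rule lin[OF acL2 rT less_imp_le[OF rab] t0r that])
      fix x assume x: "x \<in> {ra..rb}" "x \<notin> N" "x \<noteq> ra" "x \<noteq> rb"
      show "(L2 has_real_derivative 0) (at x within {0..T})"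
        using GL2[of x] x rT u1c[OF rI[OF x(1,3,4)] x(2)] u2c[OF rI[OF x(1,3,4)] x(2)] s12 by auto
    qed
    thus ?thesis by simp
  qed
  have Yr: "Yc t = (s1 - s2) * (t - t0)" if "t \<in> {ra..rb}" for t
  proof -
    have "Yc t = Yc t0 + (s1 - s2) * (t - t0)"
    proof (rule lin[OF acY rT less_imp_le[OF rab] t0r that])
      fix x assume x: "x \<in> {ra..rb}" "x \<notin> N" "x \<noteq> ra" "x \<noteq> rb"
      show "(Yc has_real_derivative (s1 - s2)) (at x within {0..T})"
        using GY[of x] x rT u1c[OF rI[OF x(1,3,4)] x(2)] u2c[OF rI[OF x(1,3,4)] x(2)] by auto
    qed
    thus ?thesis using Yt0 by simp
  qed
  have sq: "(s1 - s2)\<^sup>2 = 4" using s12 s1v by auto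
  have phir: "\<phi> t = 4 * p3 * (t - t0)\<^sup>2" if "t \<in> {ra..rb}" for t
  proof -
    have "\<phi> t = p1 + \<sigma> * L2 t0 + p3 * ((s1 - s2)\<^sup>2 * (t - t0)\<^sup>2)"
      unfolding phi_fun using L1r[OF that] L2r[OF that] L3r[OF that] Yr[OF that]
      by (simp add: power_mult_distrib)
    moreover have "p1 + \<sigma> * L2 t0 = 0"
      using phit0 L1r[OF t0r'] Yt0 unfolding phi_fun by simp
    ultimately show ?thesis using sq by simp
  qed

  show ?thesis
  proof
    show "\<exists>a b c. a \<noteq> 0 \<and> (\<forall>t\<in>I. switching Yfield lam \<gamma> j t = a * t\<^sup>2 + b * t + c)"
    proof (intro exI conjI ballI)
      show "4 * p3 \<noteq> 0" using p3nz by simp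
      fix t assume "t \<in> I"
      hence "t \<in> {ra..rb}" using RI by auto
      from phir[OF this] show "switching Yfield lam \<gamma> j t = (4 * p3) * t\<^sup>2 + (- 8 * p3 * t0) * t + 4 * p3 * t0\<^sup>2"
        unfolding \<phi>_def by (simp add: power2_eq_square algebra_simps)
    qed
    have "(\<phi> has_real_derivative 0) (at t0)"
    proof (rule deriv_quad_bound[OF eps(1), of _ _ "4 * \<bar>p3\<bar>"])
      fix t assume t: "\<bar>t - t0\<bar> < \<epsilon>"
      show "\<bar>\<phi> t\<bar> \<le> 4 * \<bar>p3\<bar> * (t - t0)\<^sup>2"
      proof (cases "t \<in> {ra..rb}")
        case True thus ?thesis using phir by (simp add: abs_mult)
      next
        case False
        hence ts: "t \<in> {sa..sb}" using cover[OF t] by auto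
        have "\<phi> t = 0"
          by (rule zero_on_closure[OF continuous_on_subset[OF cphi] sab phiJ]) (use sT ts in auto)
        thus ?thesis by simp
      qed
    qed
    thus "(switching Yfield lam \<gamma> j has_real_derivative 0) (at t0)" unfolding \<phi>_def .
  qed
qed


end
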